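(* Let $P$ be a distribution on $\mathcal X\times\mathcal Y$ with every $\mathbf x\in\mathcal X\subseteq\mathbb R^d$ satisfying $\|\mathbf x\|\le1$ and $\mathcal Y=\{-1,+1\}$ or $[-1,1]$; let $(\mathbf x_i,y_i)_{i=1}^n$ be i.i.d. from $P$. Let $R>0$, $\mathscr W=\{\mathbf w:\|\mathbf w\|\le R\}$, $\ell:\mathbb R\to\mathbb R_+$ convex, $\alpha$-exp-concave on $|z|\le R$, $|\ell'|\le G$, $\mathcal L(\mathbf w)=\mathrm E[\ell(y\mathbf w^\top\mathbf x)]$, $\mathbf w_*\in\arg\min_{\mathscr W}\mathcal L$, $\mathbf H=\mathrm E[\mathbf x\mathbf x^\top]$, $\beta=\frac12\min(\alpha,1/(4GR))$, and suppose Assumption (II) holds with constant $\theta>0$. Let $\mathbf w_1,\dots,\mathbf w_n$ be the iterates of the algorithm in the context and $A=\sum_{i=1}^n\|\mathbf w_i-\mathbf w_*\|_{\mathbf H}^2$. If $A\le4R^2/n$, then \[ \sum_{i=1}^n\left(\mathcal L(\mathbf w_i)-\mathcal L(\mathbf w_* )\right)+\frac{\theta\beta}2\sum_{i=1}^n\|\mathbf w_i-\mathbf w_*\|_{\mathbf H}^2\le2RG. \]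
   Context: $\|\mathbf w\|_{\mathbf H}^2=\mathbf w^\top\mathbf H\mathbf w$. Assumption (II): $\mathrm E[(\ell'(y\mathbf w^\top\mathbf x))^2\mathbf x\mathbf x^\top]\succeq\theta\,\mathrm E[\mathbf x\mathbf x^\top]$ for all $\mathbf w\in\mathscr W$. Algorithm with inputs $\eta_1>0$, $a>0$: $\mathbf w_1=\mathbf 0$, $\mathbf M_0=a\mathbf I$; for $i=1,\dots,n$: $\mathbf M_i=\mathbf M_{i-1}+\mathbf x_i\mathbf x_i^\top$, $\mathbf Z_i=\mathbf M_i/i$, $\mathbf v_i=\ell'(y_i\mathbf w_i^\top\mathbf x_i)\mathbf x_i$, $\eta_i=\eta_1/i$, $\mathbf w_{i+1}=\arg\min_{\mathbf w\in\mathscr W}\eta_i\langle\mathbf w,\mathbf v_i\rangle+\frac12(\mathbf w-\mathbf w_i)^\top\mathbf Z_i(\mathbf w-\mathbf w_i)$. *)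

theory Defs
  imports "HOL-Probability.Probability"
begin

definition outer :: "real^'n \<Rightarrow> real^'n^'n" where
  "outer x = (\<chi> i j. x $ i * x $ j)"

definition exp_outer :: "((real^'n) \<times> real) measure \<Rightarrow> ((real^'n) \<times> real \<Rightarrow> real) \<Rightarrow> real^'n^'n" where
  "exp_outer P g = (\<chi> i j. \<integral>z. g z * (fst z $ i) * (fst z $ j) \<partial>P)"

definition loewner_le :: "real^'n^'n \<Rightarrow> real^'n^'n \<Rightarrow> bool" where
  "loewner_le A B \<longleftrightarrow> (\<forall>v. v \<bullet> (A *v v) \<le> v \<bullet> (B *v v))"

definition hnorm2 :: "real^'n^'n \<Rightarrow> real^'n \<Rightarrow> real" where
  "hnorm2 H w = w \<bullet> (H *v w)"

definition exp_loss :: "((real^'n) \<times> real) measure \<Rightarrow> (real \<Rightarrow> real) \<Rightarrow> real^'n \<Rightarrow> real" where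
  "exp_loss P l w = (\<integral>z. l (snd z * (w \<bullet> fst z)) \<partial>P)"

definition ons_obj :: "real \<Rightarrow> real \<Rightarrow> (real \<Rightarrow> real) \<Rightarrow> (nat \<Rightarrow> real^'n) \<Rightarrow> (nat \<Rightarrow> real)
    \<Rightarrow> nat \<Rightarrow> real^'n \<Rightarrow> real^'n \<Rightarrow> real" where
  "ons_obj eta1 a dl xs ys i wi u =
     (let M = a *\<^sub>R (mat 1 :: real^'n^'n) + (\<Sum>j\<in>{1..i}. outer (xs j));
          Zm = (1 / real i) *\<^sub>R M;
          v = dl (ys i * (wi \<bullet> xs i)) *\<^sub>R xs i;
          eta = eta1 / real i
      in eta * (u \<bullet> v) + 1/2 * ((u - wi) \<bullet> (Zm *v (u - wi))))"

end

theory Submission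
  imports Defs
begin


lemma ln_ineqA:
  fixes t :: real assumes "0 \<le> t" "t < 1"
  shows "ln (1 - t) \<le> - t - t\<^sup>2 / 2"
proof -
  have "(\<lambda>s. - s - s\<^sup>2/2 - ln (1 - s)) 0 \<le> (\<lambda>s. - s - s\<^sup>2/2 - ln (1 - s)) t"
  proof (rule DERIV_nonneg_imp_nondecreasing[OF assms(1)])
    fix x assume x: "0 \<le> x" "x \<le> t"
    then have x1: "x < 1" using assms by auto
    have "DERIV (\<lambda>s. - s - s\<^sup>2/2 - ln (1 - s)) x :> (- 1 - x - (- 1) / (1 - x))"
      by (rule derivative_eq_intros refl | use x1 in simp)+
    moreover have "- 1 - x - (- 1) / (1 - x) = x\<^sup>2 / (1 - x)"
      using x1 by (simp add: field_simps power2_eq_square)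
    moreover have "x\<^sup>2 / (1 - x) \<ge> 0" using x1 by simp
    ultimately show "\<exists>y. DERIV (\<lambda>s. - s - s\<^sup>2/2 - ln (1 - s)) x :> y \<and> y \<ge> 0" by auto
  qed
  then show ?thesis by simp
qed

lemma ln_ineqB:
  fixes s :: real assumes "0 \<le> s"
  shows "ln (1 + s) \<le> s - s\<^sup>2 / (2 * (1 + s))"
proof -
  have "(\<lambda>s. s - s\<^sup>2 / (2 * (1 + s)) - ln (1 + s)) 0 \<le> (\<lambda>s. s - s\<^sup>2 / (2 * (1 + s)) - ln (1 + s)) s"
  proof (rule DERIV_nonneg_imp_nondecreasing[OF assms(1)])
    fix x assume x: "0 \<le> x" "x \<le> s"
    have "DERIV (\<lambda>s. s - s\<^sup>2 / (2 * (1 + s)) - ln (1 + s)) x :>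
       (1 - ((2 * x) * (2 * (1 + x)) - x\<^sup>2 * 2) / (2 * (1 + x))\<^sup>2 - 1 / (1 + x))"
      by (rule derivative_eq_intros refl | use x in \<open>simp add: power2_eq_square\<close>)+
    moreover have "(1 - ((2 * x) * (2 * (1 + x)) - x\<^sup>2 * 2) / (2 * (1 + x))\<^sup>2 - 1 / (1 + x)) = x\<^sup>2 / (2 * (1 + x)\<^sup>2)"
    proof -
      have "1 + x > 0" using x by simp
      then show ?thesis by (simp add: divide_simps power2_eq_square) (simp add: algebra_simps)
    qed
    moreover have "x\<^sup>2 / (2 * (1 + x)\<^sup>2) \<ge> 0" by simp
    ultimately show "\<exists>y. DERIV (\<lambda>s. s - s\<^sup>2 / (2 * (1 + s)) - ln (1 + s)) x :> y \<and> y \<ge> 0" by auto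
  qed
  then show ?thesis by simp
qed

lemma ln_ineq:
  fixes t k :: real assumes "t < 1" "0 \<le> k" "2 * k * (1 + \<bar>t\<bar>) \<le> 1"
  shows "ln (1 - t) \<le> - t - k * t\<^sup>2"
proof (cases "t \<ge> 0")
  case True
  have "2*k*1 \<le> 2*k*(1+\<bar>t\<bar>)" by (rule mult_left_mono) (use assms in auto)
  then have "k \<le> 1/2" using assms by linarith
  then have "(2*k) * t\<^sup>2 \<le> 1 * t\<^sup>2" by (intro mult_right_mono) auto
  then have "k * t\<^sup>2 \<le> t\<^sup>2/2" by simp
  then show ?thesis using ln_ineqA[OF True assms(1)] by linarith
next
  case False
  define s where "s = - t"
  have s: "s \<ge> 0" "1 - t = 1 + s" "\<bar>t\<bar> = s" using False by (auto simp: s_def)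
  have "k * s\<^sup>2 \<le> s\<^sup>2 / (2 * (1 + s))"
  proof -
    have "k * (2 * (1 + s)) \<le> 1" using assms(3) s by (simp add: algebra_simps)
    then have "k \<le> 1 / (2 * (1 + s))" using s by (simp add: pos_le_divide_eq)
    then have "k * s\<^sup>2 \<le> 1 / (2 * (1 + s)) * s\<^sup>2" by (intro mult_right_mono) auto
    then show ?thesis by simp
  qed
  moreover have "- t - k * t\<^sup>2 = s - k * s\<^sup>2" by (simp add: s_def)
  moreover have "ln (1 - t) = ln (1 + s)" by (simp only: s(2))
  ultimately show ?thesis using ln_ineqB[OF s(1)] by linarith
qed

lemma concave_tangent:
  fixes h :: "real \<Rightarrow> real"
  assumes conc: "concave_on {p..q} h" and c: "c \<in> {p..q}" and x: "x \<in> {p..q}"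
    and d: "(h has_real_derivative h') (at c)"
  shows "h x \<le> h c + h' * (x - c)"
proof -
  define g where "g t = h (c + t * (x - c))" for t
  have gd: "(g has_real_derivative h' * (x - c)) (at 0)"
  proof -
    have "((\<lambda>t. c + t * (x - c)) has_real_derivative (x - c)) (at 0)"
      by (rule derivative_eq_intros refl | simp)+
    from DERIV_chain2[OF _ this, of h h'] d show ?thesis unfolding g_def by (simp add: mult.commute)
  qed
  then have L: "((\<lambda>t. (g t - g 0) / (t - 0)) \<longlongrightarrow> h' * (x - c)) (at 0)"
    unfolding has_field_derivative_iff .
  have "((\<lambda>t. (g t - g 0) / (t - 0)) \<longlongrightarrow> h' * (x - c)) (at_right 0)"
    by (rule tendsto_mono[OF at_le L]) simp
  then have lim: "((\<lambda>t. (g t - g 0) / t) \<longlongrightarrow> h' * (x - c)) (at_right 0)" by simp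
  have ev: "eventually (\<lambda>t. h x - h c \<le> (g t - g 0) / t) (at_right 0)"
    using eventually_at_right_real[OF zero_less_one]
  proof eventually_elim
    case (elim t)
    then have t: "0 < t" "t < 1" by auto
    have "- h ((1 - t) *\<^sub>R c + t *\<^sub>R x) \<le> (1 - t) * (- h c) + t * (- h x)"
      using convex_onD[OF conc[unfolded concave_on_def], of t c x] t c x by auto
    moreover have "(1 - t) *\<^sub>R c + t *\<^sub>R x = c + t * (x - c)" by (simp add: algebra_simps)
    ultimately have "- g t \<le> (1 - t) * (- h c) + t * (- h x)" unfolding g_def by simp
    moreover have "g 0 = h c" by (simp add: g_def)
    ultimately have "t * (h x - h c) \<le> g t - g 0" by (simp add: algebra_simps)
    then show ?case using t by (simp add: pos_le_divide_eq mult.commute[of t])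
  qed
  have "h x - h c \<le> h' * (x - c)"
    by (rule tendsto_lowerbound[OF lim ev]) simp
  then show ?thesis by simp
qed



lemma expconc_1d:
  fixes l dl :: "real \<Rightarrow> real"
  assumes l_deriv: "\<forall>z. (l has_real_derivative dl z) (at z)"
    and alpha: "alpha > 0" and R: "R > 0"
    and l_expconc: "concave_on {-R..R} (\<lambda>z. exp (- alpha * l z))"
    and G: "G > 0" "\<forall>z. \<bar>dl z\<bar> \<le> G"
    and beta: "beta = 1/2 * min alpha (1 / (4 * G * R))"
    and a: "\<bar>a\<bar> \<le> R" and b: "\<bar>b\<bar> \<le> R"
  shows "l a + dl a * (b - a) + beta / 2 * (dl a * (b - a))\<^sup>2 \<le> l b"
proof -
  define c where "c = dl a * (b - a)"
  define t where "t = alpha * c"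
  define k where "k = beta / (2 * alpha)"
  have hd: "((\<lambda>z. exp (- alpha * l z)) has_real_derivative exp (- alpha * l a) * (- alpha * dl a)) (at a)"
    by (rule derivative_eq_intros refl l_deriv[rule_format] | simp)+
  have tan: "exp (- alpha * l b) \<le> exp (- alpha * l a) + exp (- alpha * l a) * (- alpha * dl a) * (b - a)"
  proof -
    have "a \<in> {-R..R}" "b \<in> {-R..R}" using a b by auto
    from concave_tangent[OF l_expconc this hd] show ?thesis .
  qed
  then have tan2: "exp (- alpha * l b) \<le> exp (- alpha * l a) * (1 - t)"
    by (simp add: t_def c_def algebra_simps)
  have t1: "0 < 1 - t"
  proof -
    have "0 < exp (- alpha * l a) * (1 - t)" using tan2 by (smt (verit) exp_gt_zero)
    then show ?thesis by (simp add: zero_less_mult_iff)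
  qed
  have "- alpha * l b \<le> ln (exp (- alpha * l a) * (1 - t))"
    using tan2 t1 by (metis exp_gt_zero exp_le_cancel_iff exp_ln mult_pos_pos)
  also have "\<dots> = - alpha * l a + ln (1 - t)" using t1 by (simp add: ln_mult)
  finally have e1: "- alpha * l b \<le> - alpha * l a + ln (1 - t)" .
  have beta_pos: "beta > 0"
  proof -
    have "0 < 1 / (4 * G * R)" using G R by simp
    then have "min alpha (1 / (4 * G * R)) > 0" using alpha by simp
    then show ?thesis using beta by linarith
  qed
  have b1: "beta \<le> alpha / 2" using beta by simp
  have b2: "beta \<le> 1 / (8 * G * R)" using beta by simp
  have cb: "\<bar>c\<bar> \<le> G * (2 * R)"
  proof -
    have "\<bar>c\<bar> = \<bar>dl a\<bar> * \<bar>b - a\<bar>" by (simp add: c_def abs_mult)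
    also have "\<dots> \<le> G * (2 * R)" using G a b by (intro mult_mono) auto
    finally show ?thesis .
  qed
  have k0: "0 \<le> k" using beta_pos alpha by (simp add: k_def)
  have "2 * k * (1 + \<bar>t\<bar>) = beta / alpha + beta * \<bar>c\<bar>"
    using alpha by (simp add: k_def t_def abs_mult field_simps)
  also have "\<dots> \<le> 1/2 + 1/4"
  proof -
    have "beta / alpha \<le> 1/2" using b1 alpha by (simp add: divide_simps)
    moreover have "beta * \<bar>c\<bar> \<le> 1 / (8 * G * R) * (G * (2 * R))"
      using b2 cb beta_pos by (intro mult_mono) auto
    moreover have "1 / (8 * G * R) * (G * (2 * R)) = 1/4" using G R by (simp add: field_simps)
    ultimately show ?thesis by linarith
  qed
  finally have "2 * k * (1 + \<bar>t\<bar>) \<le> 1" by simp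
  from ln_ineq[OF _ k0 this] t1 have "ln (1 - t) \<le> - t - k * t\<^sup>2" by simp
  with e1 have "- alpha * l b \<le> - alpha * l a - t - k * t\<^sup>2" by simp
  also have "- alpha * l a - t - k * t\<^sup>2 = - alpha * (l a + c + beta / 2 * c\<^sup>2)"
    using alpha by (simp add: t_def k_def field_simps power2_eq_square)
  finally have "alpha * (l a + c + beta / 2 * c\<^sup>2) \<le> alpha * l b" by simp
  then show ?thesis using alpha by (simp add: c_def)
qed

lemma pointwise:
  fixes l dl :: "real \<Rightarrow> real"
  assumes l_deriv: "\<forall>z. (l has_real_derivative dl z) (at z)"
    and alpha: "alpha > 0" and R: "R > 0"
    and l_expconc: "concave_on {-R..R} (\<lambda>z. exp (- alpha * l z))"
    and G: "G > 0" "\<forall>z. \<bar>dl z\<bar> \<le> G"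
    and beta: "beta = 1/2 * min alpha (1 / (4 * G * R))"
    and x: "norm (x::real^'d) \<le> 1" and y: "\<bar>y\<bar> \<le> 1"
    and w: "norm w \<le> R" and ws: "norm ws \<le> R"
  shows "l (y * (w \<bullet> x)) - l (y * (ws \<bullet> x)) + beta / 2 * ((dl (y * (w \<bullet> x)))\<^sup>2 * ((w - ws) \<bullet> x)\<^sup>2)
         \<le> G * \<bar>(w - ws) \<bullet> x\<bar>"
proof -
  define a where "a = y * (w \<bullet> x)"
  define b where "b = y * (ws \<bullet> x)"
  define c where "c = (w - ws) \<bullet> x"
  define g where "g = dl a"
  have ia: "\<bar>v \<bullet> x\<bar> \<le> norm v" for v :: "real^'d"
  proof -
    have "\<bar>v \<bullet> x\<bar> \<le> norm v * norm x" by (rule Cauchy_Schwarz_ineq2)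
    also have "\<dots> \<le> norm v * 1" using x by (intro mult_left_mono) auto
    finally show ?thesis by simp
  qed
  have aR: "\<bar>a\<bar> \<le> R"
  proof -
    have "\<bar>a\<bar> = \<bar>y\<bar> * \<bar>w \<bullet> x\<bar>" by (simp add: a_def abs_mult)
    also have "\<dots> \<le> 1 * R" using y ia[of w] w by (intro mult_mono) auto
    finally show ?thesis by simp
  qed
  have bR: "\<bar>b\<bar> \<le> R"
  proof -
    have "\<bar>b\<bar> = \<bar>y\<bar> * \<bar>ws \<bullet> x\<bar>" by (simp add: b_def abs_mult)
    also have "\<dots> \<le> 1 * R" using y ia[of ws] ws by (intro mult_mono) auto
    finally show ?thesis by simp
  qed
  have cR: "\<bar>c\<bar> \<le> 2 * R"
  proof -
    have "norm (w - ws) \<le> norm w + norm ws" by (rule norm_triangle_ineq4)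
    then show ?thesis using ia[of "w - ws"] w ws by (simp add: c_def)
  qed
  have ba: "b - a = - y * c" by (simp add: a_def b_def c_def inner_diff_left algebra_simps)
  have ec: "l a + g * (b - a) + beta / 2 * (g * (b - a))\<^sup>2 \<le> l b"
    unfolding g_def by (rule expconc_1d[OF l_deriv alpha R l_expconc G beta aR bR])
  have beta_pos: "beta > 0"
  proof -
    have "0 < 1 / (4 * G * R)" using G R by simp
    then have "min alpha (1 / (4 * G * R)) > 0" using alpha by simp
    then show ?thesis using beta by linarith
  qed
  have b2: "beta \<le> 1 / (8 * G * R)" using beta by simp
  have gG: "\<bar>g\<bar> \<le> G" using G by (simp add: g_def)
  have y2: "y\<^sup>2 \<le> 1" using y by (simp add: abs_square_le_1)
  have main: "l a - l b + beta / 2 * (g\<^sup>2 * c\<^sup>2) \<le> g * y * c + beta / 2 * (g\<^sup>2 * c\<^sup>2) * (1 - y\<^sup>2)"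
  proof -
    have e1: "g * (b - a) = - (g * y * c)" by (simp add: ba)
    have e2: "beta / 2 * (g * (b - a))\<^sup>2 = beta / 2 * (g\<^sup>2 * c\<^sup>2) * y\<^sup>2"
      by (simp add: ba power2_eq_square)
    have e3: "beta / 2 * (g\<^sup>2 * c\<^sup>2) * (1 - y\<^sup>2) = beta / 2 * (g\<^sup>2 * c\<^sup>2) - beta / 2 * (g\<^sup>2 * c\<^sup>2) * y\<^sup>2"
      by (simp only: right_diff_distrib mult_1_right)
    show ?thesis using ec e1 e2 e3 by linarith
  qed
  have q: "beta * (g\<^sup>2 * c\<^sup>2) \<le> \<bar>g\<bar> * \<bar>c\<bar> / 4"
  proof -
    have "beta * (g\<^sup>2 * c\<^sup>2) = beta * (\<bar>g\<bar> * \<bar>c\<bar>) * (\<bar>g\<bar> * \<bar>c\<bar>)"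
      by (simp add: power2_eq_square abs_mult_self_eq algebra_simps)
    also have "\<dots> \<le> 1 / (8 * G * R) * (\<bar>g\<bar> * \<bar>c\<bar>) * (G * (2 * R))"
    proof -
      have PP: "\<bar>g\<bar> * \<bar>c\<bar> \<le> G * (2 * R)" using gG cR by (intro mult_mono) auto
      have "beta * (\<bar>g\<bar> * \<bar>c\<bar>) \<le> 1 / (8 * G * R) * (\<bar>g\<bar> * \<bar>c\<bar>)"
        by (rule mult_right_mono[OF b2]) simp
      moreover have "0 \<le> 1 / (8 * G * R) * (\<bar>g\<bar> * \<bar>c\<bar>)" using G R by simp
      ultimately show ?thesis using PP by (rule_tac mult_mono) auto
    qed
    also have "\<dots> = \<bar>g\<bar> * \<bar>c\<bar> / 4" using G R by (simp add: field_simps)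
    finally show ?thesis .
  qed
  define p where "p = \<bar>g\<bar> * \<bar>c\<bar>"
  have p0: "0 \<le> p" by (simp add: p_def)
  have t1: "g * y * c \<le> p * \<bar>y\<bar>"
  proof -
    have "g * y * c \<le> \<bar>g * y * c\<bar>" by simp
    also have "\<dots> = p * \<bar>y\<bar>" by (simp add: p_def abs_mult)
    finally show ?thesis .
  qed
  have t2: "beta / 2 * (g\<^sup>2 * c\<^sup>2) * (1 - y\<^sup>2) \<le> p / 8 * (1 - y\<^sup>2)"
  proof -
    have q': "beta / 2 * (g\<^sup>2 * c\<^sup>2) \<le> p / 8" using q unfolding p_def by linarith
    show ?thesis using q' y2 by (intro mult_right_mono) auto
  qed
  have yy: "y\<^sup>2 = \<bar>y\<bar>\<^sup>2" by simp
  have t3: "\<bar>y\<bar> + (1 - y\<^sup>2) / 8 \<le> 1"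
  proof -
    have "0 \<le> (1 - \<bar>y\<bar>) * (7 - \<bar>y\<bar>)" using y by (intro mult_nonneg_nonneg) auto
    then have "\<bar>y\<bar> * 8 \<le> y * y + 7" by (simp add: power2_eq_square algebra_simps)
    then show ?thesis unfolding power2_eq_square by (simp add: field_simps)
  qed
  have "l a - l b + beta / 2 * (g\<^sup>2 * c\<^sup>2) \<le> p * (\<bar>y\<bar> + (1 - y\<^sup>2) / 8)"
  proof -
    have e: "p * (\<bar>y\<bar> + (1 - y\<^sup>2) / 8) = p * \<bar>y\<bar> + p / 8 * (1 - y\<^sup>2)" by (simp add: algebra_simps)
    show ?thesis using main t1 t2 e by linarith
  qed
  also have "\<dots> \<le> p * 1" using p0 t3 by (intro mult_left_mono) auto
  also have "\<dots> \<le> G * \<bar>c\<bar>" using gG by (simp add: p_def mult_right_mono)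
  finally show ?thesis by (simp add: a_def b_def c_def g_def)
qed



lemma deriv_measurable:
  fixes l dl :: "real \<Rightarrow> real"
  assumes l_deriv: "\<forall>z. (l has_real_derivative dl z) (at z)"
  shows "dl \<in> borel_measurable borel"
proof (rule borel_measurable_LIMSEQ_real)
  fix i :: nat
  have "continuous_on UNIV l"
    using l_deriv by (meson DERIV_isCont continuous_at_imp_continuous_on)
  then have lm: "l \<in> borel_measurable borel" by (rule borel_measurable_continuous_onI)
  show "(\<lambda>x. (l (x + 1 / Suc i) - l x) * Suc i) \<in> borel_measurable borel"
    using lm by measurable
next
  fix x :: real assume "x \<in> space borel"
  have D: "((\<lambda>h. (l (x + h) - l x) / h) \<longlongrightarrow> dl x) (at 0)"
    using l_deriv by (simp add: DERIV_def)
  have F: "filterlim (\<lambda>i::nat. 1 / real (Suc i)) (at 0) sequentially"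
  proof (subst filterlim_at, intro conjI)
    show "\<forall>\<^sub>F i in sequentially. 1 / real (Suc i) \<in> UNIV \<and> 1 / real (Suc i) \<noteq> 0" by simp
    show "((\<lambda>i::nat. 1 / real (Suc i)) \<longlongrightarrow> 0) sequentially"
      using LIMSEQ_inverse_real_of_nat by (simp add: inverse_eq_divide)
  qed
  have "((\<lambda>i. (l (x + 1 / real (Suc i)) - l x) / (1 / real (Suc i))) \<longlongrightarrow> dl x) sequentially"
    using filterlim_compose[OF D F] by simp
  then show "(\<lambda>i. (l (x + 1 / Suc i) - l x) * Suc i) \<longlonglongrightarrow> dl x" by simp
qed

lemma quad_form:
  fixes P :: "((real^'d) \<times> real) measure" and g :: "(real^'d) \<times> real \<Rightarrow> real"
  assumes P: "prob_space P" "sets P = sets borel"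
    and supp: "AE z in P. norm (fst z) \<le> 1"
    and gm: "g \<in> borel_measurable borel" and gb: "AE z in P. \<bar>g z\<bar> \<le> B"
  shows "v \<bullet> (exp_outer P g *v v) = (\<integral>z. g z * (v \<bullet> fst z)\<^sup>2 \<partial>P)"
proof -
  interpret prob_space P by (rule P(1))
  have meas: "f \<in> borel_measurable P" if "f \<in> borel_measurable borel" for f :: "_ \<Rightarrow> real"
  proof -
    have "measurable P (borel :: real measure) = measurable borel borel"
      by (rule measurable_cong_sets[OF P(2) refl])
    then show ?thesis using that by simp
  qed
  have comp: "(\<lambda>z. fst z $ i) \<in> borel_measurable borel" for i
    by (intro borel_measurable_continuous_onI continuous_intros)
  have int: "integrable P (\<lambda>z. v $ i * v $ j * (g z * fst z $ i * fst z $ j))" for i j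
  proof (rule integrable_const_bound[where B = "\<bar>v $ i\<bar> * \<bar>v $ j\<bar> * B"])
    show "(\<lambda>z. v $ i * v $ j * (g z * fst z $ i * fst z $ j)) \<in> borel_measurable P"
      by (intro meas) (use gm comp in measurable)
    show "AE z in P. norm (v $ i * v $ j * (g z * fst z $ i * fst z $ j)) \<le> \<bar>v $ i\<bar> * \<bar>v $ j\<bar> * B"
      using supp gb
    proof eventually_elim
      case (elim z)
      have xi: "\<bar>fst z $ i\<bar> \<le> 1" using component_le_norm_cart[of "fst z" i] elim by simp
      have xj: "\<bar>fst z $ j\<bar> \<le> 1" using component_le_norm_cart[of "fst z" j] elim by simp
      have "\<bar>g z * fst z $ i * fst z $ j\<bar> = \<bar>g z\<bar> * (\<bar>fst z $ i\<bar> * \<bar>fst z $ j\<bar>)" by (simp add: abs_mult)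
      also have "\<dots> \<le> B * 1" using elim xi xj by (intro mult_mono) (auto intro: mult_le_one)
      finally have "\<bar>g z * fst z $ i * fst z $ j\<bar> \<le> B" by simp
      then show ?case by (simp add: abs_mult mult_left_mono)
    qed
  qed
  have "v \<bullet> (exp_outer P g *v v) = (\<Sum>i\<in>UNIV. \<Sum>j\<in>UNIV. v $ i * v $ j * (\<integral>z. g z * fst z $ i * fst z $ j \<partial>P))"
    by (simp add: exp_outer_def inner_vec_def matrix_vector_mult_def sum_distrib_left mult.assoc mult.left_commute mult.commute)
  also have "\<dots> = (\<Sum>i\<in>UNIV. \<Sum>j\<in>UNIV. \<integral>z. v $ i * v $ j * (g z * fst z $ i * fst z $ j) \<partial>P)"
    by (simp only: integral_mult_right_zero)
  also have "\<dots> = (\<Sum>i\<in>UNIV. \<integral>z. (\<Sum>j\<in>UNIV. v $ i * v $ j * (g z * fst z $ i * fst z $ j)) \<partial>P)"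
    by (intro sum.cong refl, rule Bochner_Integration.integral_sum[where f="\<lambda>j z. v $ i * v $ j * (g z * fst z $ i * fst z $ j)" for i, symmetric]) (rule int)
  also have "\<dots> = (\<integral>z. (\<Sum>i\<in>UNIV. \<Sum>j\<in>UNIV. v $ i * v $ j * (g z * fst z $ i * fst z $ j)) \<partial>P)"
    by (rule Bochner_Integration.integral_sum[where f="\<lambda>i z. \<Sum>j\<in>UNIV. v $ i * v $ j * (g z * fst z $ i * fst z $ j)", symmetric])
       (intro Bochner_Integration.integrable_sum int)
  also have "\<dots> = (\<integral>z. g z * (v \<bullet> fst z)\<^sup>2 \<partial>P)"
  proof -
    have pw: "(\<Sum>i\<in>UNIV. \<Sum>j\<in>UNIV. v $ i * v $ j * (g z * fst z $ i * fst z $ j)) = g z * (v \<bullet> fst z)\<^sup>2" for z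
    proof -
      have "(v \<bullet> fst z)\<^sup>2 = (\<Sum>i\<in>UNIV. v $ i * fst z $ i) * (\<Sum>j\<in>UNIV. v $ j * fst z $ j)"
        by (simp add: inner_vec_def power2_eq_square)
      also have "\<dots> = (\<Sum>i\<in>UNIV. \<Sum>j\<in>UNIV. (v $ i * fst z $ i) * (v $ j * fst z $ j))"
        by (rule sum_product)
      finally show ?thesis
        by (simp add: sum_distrib_left algebra_simps)
    qed
    show ?thesis by (simp only: pw)
  qed
  finally show ?thesis .
qed



lemma meas_P:
  fixes P :: "'a::topological_space measure"
  assumes "sets P = sets borel" "f \<in> borel_measurable borel"
  shows "(f :: 'a \<Rightarrow> real) \<in> borel_measurable P"
proof -
  have "measurable P (borel :: real measure) = measurable borel borel"
    by (rule measurable_cong_sets[OF assms(1) refl])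
  then show ?thesis using assms(2) by simp
qed

lemma abs_integral_sq:
  assumes "prob_space M" "integrable M f" "integrable M (\<lambda>x. (f x)\<^sup>2)"
  shows "(\<integral>x. f x \<partial>M) \<le> sqrt (\<integral>x. (f x)\<^sup>2 \<partial>M)"
proof -
  interpret prob_space M by (rule assms(1))
  have "0 \<le> (\<integral>x. (f x)\<^sup>2 \<partial>M) - (\<integral>x. f x \<partial>M)\<^sup>2"
    using variance_eq[OF assms(2,3)] variance_positive[of f] by simp
  then have "(\<integral>x. f x \<partial>M)\<^sup>2 \<le> (\<integral>x. (f x)\<^sup>2 \<partial>M)" by simp
  then have "sqrt ((\<integral>x. f x \<partial>M)\<^sup>2) \<le> sqrt (\<integral>x. (f x)\<^sup>2 \<partial>M)" by (rule real_sqrt_le_mono)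
  then show ?thesis by simp
qed

lemma ip_bound:
  fixes x w :: "real^'d"
  assumes "norm x \<le> 1" shows "\<bar>w \<bullet> x\<bar> \<le> norm w"
proof -
  have "\<bar>w \<bullet> x\<bar> \<le> norm w * norm x" by (rule Cauchy_Schwarz_ineq2)
  also have "\<dots> \<le> norm w * 1" using assms by (intro mult_left_mono) auto
  finally show ?thesis by simp
qed

lemma per_i:
  fixes P :: "((real^'d) \<times> real) measure"
    and l dl :: "real \<Rightarrow> real"
  assumes P: "prob_space P" "sets P = sets borel"
    and supp: "AE z in P. norm (fst z) \<le> 1 \<and> \<bar>snd z\<bar> \<le> 1"
    and l_deriv: "\<forall>z. (l has_real_derivative dl z) (at z)"
    and alpha: "alpha > 0" and R: "R > 0"
    and l_expconc: "concave_on {-R..R} (\<lambda>z. exp (- alpha * l z))"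
    and G: "G > 0" "\<forall>z. \<bar>dl z\<bar> \<le> G"
    and beta: "beta = 1/2 * min alpha (1 / (4 * G * R))"
    and theta: "theta > 0"
    and II: "loewner_le (theta *\<^sub>R exp_outer P (\<lambda>_. 1))
                              (exp_outer P (\<lambda>z. (dl (snd z * (w \<bullet> fst z)))\<^sup>2))"
    and w: "norm w \<le> R" and ws: "norm ws \<le> R"
  shows "exp_loss P l w - exp_loss P l ws + theta * beta / 2 * hnorm2 (exp_outer P (\<lambda>_. 1)) (w - ws)
          \<le> G * sqrt (hnorm2 (exp_outer P (\<lambda>_. 1)) (w - ws))"
    and "hnorm2 (exp_outer P (\<lambda>_. 1)) (w - ws) \<ge> 0"
proof -
  interpret prob_space P by (rule P(1))
  define d where "d = w - ws"
  define H where "H = exp_outer P (\<lambda>_. 1)"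
  have suppx: "AE z in P. norm (fst z) \<le> 1" using supp by auto
  have lc: "continuous_on UNIV l"
    using l_deriv by (meson DERIV_isCont continuous_at_imp_continuous_on)
  have lm[measurable]: "l \<in> borel_measurable borel" using lc by (rule borel_measurable_continuous_onI)
  have dlm[measurable]: "dl \<in> borel_measurable borel" by (rule deriv_measurable[OF l_deriv])
  have ctm: "(\<lambda>z::(real^'d)\<times>real. snd z * (v \<bullet> fst z)) \<in> borel_measurable borel" for v
    by (intro borel_measurable_continuous_onI continuous_intros)
  have la[measurable]: "(\<lambda>z::(real^'d)\<times>real. l (snd z * (v \<bullet> fst z))) \<in> borel_measurable borel" for v
    by (rule measurable_compose[OF ctm lm])
  have dla[measurable]: "(\<lambda>z::(real^'d)\<times>real. dl (snd z * (v \<bullet> fst z))) \<in> borel_measurable borel" for v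
    by (rule measurable_compose[OF ctm dlm])
  have cm[measurable]: "(\<lambda>z::(real^'d)\<times>real. d \<bullet> fst z) \<in> borel_measurable borel"
    by (intro borel_measurable_continuous_onI continuous_intros)
  have beta_pos: "beta > 0"
  proof -
    have "0 < 1 / (4 * G * R)" using G R by simp
    then have "min alpha (1 / (4 * G * R)) > 0" using alpha by simp
    then show ?thesis using beta by linarith
  qed
  obtain Bl where Bl: "\<forall>t\<in>{-R..R}. \<bar>l t\<bar> \<le> Bl"
  proof -
    have "bounded (l ` {-R..R})"
      by (rule compact_imp_bounded, rule compact_continuous_image)
         (use lc continuous_on_subset in auto)
    then show ?thesis using that by (auto simp: bounded_iff)
  qed
  have aR: "\<bar>snd z * (v \<bullet> fst z)\<bar> \<le> R"
    if "norm (fst z) \<le> 1" "\<bar>snd z\<bar> \<le> 1" "norm v \<le> R" for z and v :: "real^'d"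
  proof -
    have "\<bar>snd z * (v \<bullet> fst z)\<bar> = \<bar>snd z\<bar> * \<bar>v \<bullet> fst z\<bar>" by (simp add: abs_mult)
    also have "\<dots> \<le> 1 * R" using that ip_bound[OF that(1), of v] by (intro mult_mono) auto
    finally show ?thesis by simp
  qed
  have intl: "integrable P (\<lambda>z. l (snd z * (v \<bullet> fst z)))" if "norm v \<le> R" for v :: "real^'d"
  proof (rule integrable_const_bound[where B = Bl])
    show "(\<lambda>z. l (snd z * (v \<bullet> fst z))) \<in> borel_measurable P"
      by (rule meas_P[OF P(2)]) (rule la)
    show "AE z in P. norm (l (snd z * (v \<bullet> fst z))) \<le> Bl"
      using supp
    proof eventually_elim
      case (elim z)
      then have "\<bar>snd z * (v \<bullet> fst z)\<bar> \<le> R" using aR[OF _ _ that] by auto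
      then show ?case using Bl by (simp add: abs_le_iff)
    qed
  qed
  have intc: "integrable P (\<lambda>z. \<bar>d \<bullet> fst z\<bar>)"
  proof (rule integrable_const_bound[where B = "norm d"])
    show "(\<lambda>z. \<bar>d \<bullet> fst z\<bar>) \<in> borel_measurable P" by (rule meas_P[OF P(2)]) measurable
    show "AE z in P. norm \<bar>d \<bullet> fst z\<bar> \<le> norm d"
      using suppx by eventually_elim (use ip_bound in auto)
  qed
  have intc2: "integrable P (\<lambda>z. \<bar>d \<bullet> fst z\<bar>\<^sup>2)"
  proof (rule integrable_const_bound[where B = "(norm d)\<^sup>2"])
    show "(\<lambda>z. \<bar>d \<bullet> fst z\<bar>\<^sup>2) \<in> borel_measurable P" by (rule meas_P[OF P(2)]) measurable
    show "AE z in P. norm (\<bar>d \<bullet> fst z\<bar>\<^sup>2) \<le> (norm d)\<^sup>2"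
      using suppx
    proof eventually_elim
      case (elim z)
      have "\<bar>d \<bullet> fst z\<bar>\<^sup>2 \<le> (norm d)\<^sup>2" using ip_bound[OF elim] by (intro power_mono) auto
      then show ?case by simp
    qed
  qed
  have intq: "integrable P (\<lambda>z. (dl (snd z * (w \<bullet> fst z)))\<^sup>2 * (d \<bullet> fst z)\<^sup>2)"
  proof (rule integrable_const_bound[where B = "G\<^sup>2 * (norm d)\<^sup>2"])
    show "(\<lambda>z. (dl (snd z * (w \<bullet> fst z)))\<^sup>2 * (d \<bullet> fst z)\<^sup>2) \<in> borel_measurable P"
      by (rule meas_P[OF P(2)]) measurable
    show "AE z in P. norm ((dl (snd z * (w \<bullet> fst z)))\<^sup>2 * (d \<bullet> fst z)\<^sup>2) \<le> G\<^sup>2 * (norm d)\<^sup>2"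
      using suppx
    proof eventually_elim
      case (elim z)
      have "\<bar>dl (snd z * (w \<bullet> fst z))\<bar>\<^sup>2 \<le> G\<^sup>2" using G by (intro power_mono) auto
      moreover have "\<bar>d \<bullet> fst z\<bar>\<^sup>2 \<le> (norm d)\<^sup>2" using ip_bound[OF elim] by (intro power_mono) auto
      ultimately show ?case by (simp add: abs_mult mult_mono)
    qed
  qed
  have hq: "hnorm2 H d = (\<integral>z. (d \<bullet> fst z)\<^sup>2 \<partial>P)"
    unfolding hnorm2_def H_def
    using quad_form[OF P suppx, of "\<lambda>_. 1" 1 d] by simp
  have hq2: "d \<bullet> (exp_outer P (\<lambda>z. (dl (snd z * (w \<bullet> fst z)))\<^sup>2) *v d)
      = (\<integral>z. (dl (snd z * (w \<bullet> fst z)))\<^sup>2 * (d \<bullet> fst z)\<^sup>2 \<partial>P)"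
  proof (rule quad_form[OF P suppx, where B = "G\<^sup>2"])
    show "(\<lambda>z. (dl (snd z * (w \<bullet> fst z)))\<^sup>2) \<in> borel_measurable borel" by measurable
    show "AE z in P. \<bar>(dl (snd z * (w \<bullet> fst z)))\<^sup>2\<bar> \<le> G\<^sup>2"
    proof (rule AE_I2)
      fix z
      have "\<bar>dl (snd z * (w \<bullet> fst z))\<bar>\<^sup>2 \<le> G\<^sup>2" using G by (intro power_mono) auto
      then show "\<bar>(dl (snd z * (w \<bullet> fst z)))\<^sup>2\<bar> \<le> G\<^sup>2" by simp
    qed
  qed
  have h0: "hnorm2 H d \<ge> 0" unfolding hq by simp
  have thq: "theta * hnorm2 H d \<le> (\<integral>z. (dl (snd z * (w \<bullet> fst z)))\<^sup>2 * (d \<bullet> fst z)\<^sup>2 \<partial>P)"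
  proof -
    have "d \<bullet> ((theta *\<^sub>R H) *v d) \<le> d \<bullet> (exp_outer P (\<lambda>z. (dl (snd z * (w \<bullet> fst z)))\<^sup>2) *v d)"
      using II unfolding loewner_le_def H_def by blast
    moreover have "d \<bullet> ((theta *\<^sub>R H) *v d) = theta * hnorm2 H d"
      by (simp add: scaleR_matrix_vector_assoc[symmetric] hnorm2_def)
    ultimately show ?thesis using hq2 by simp
  qed
  have pt: "AE z in P. l (snd z * (w \<bullet> fst z)) - l (snd z * (ws \<bullet> fst z))
      + beta / 2 * ((dl (snd z * (w \<bullet> fst z)))\<^sup>2 * (d \<bullet> fst z)\<^sup>2) \<le> G * \<bar>d \<bullet> fst z\<bar>"
    using supp
  proof eventually_elim
    case (elim z)
    then show ?case unfolding d_def
      by (intro pointwise[OF l_deriv alpha R l_expconc G beta _ _ w ws]) auto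
  qed
  have "(\<integral>z. l (snd z * (w \<bullet> fst z)) - l (snd z * (ws \<bullet> fst z))
      + beta / 2 * ((dl (snd z * (w \<bullet> fst z)))\<^sup>2 * (d \<bullet> fst z)\<^sup>2) \<partial>P) \<le> (\<integral>z. G * \<bar>d \<bullet> fst z\<bar> \<partial>P)"
    by (rule integral_mono_AE) (use pt intl[OF w] intl[OF ws] intq intc in auto)
  moreover have "(\<integral>z. l (snd z * (w \<bullet> fst z)) - l (snd z * (ws \<bullet> fst z))
      + beta / 2 * ((dl (snd z * (w \<bullet> fst z)))\<^sup>2 * (d \<bullet> fst z)\<^sup>2) \<partial>P)
      = exp_loss P l w - exp_loss P l ws + beta / 2 * (\<integral>z. (dl (snd z * (w \<bullet> fst z)))\<^sup>2 * (d \<bullet> fst z)\<^sup>2 \<partial>P)"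
    using intl[OF w] intl[OF ws] intq by (simp add: exp_loss_def)
  moreover have "(\<integral>z. G * \<bar>d \<bullet> fst z\<bar> \<partial>P) \<le> G * sqrt (hnorm2 H d)"
  proof -
    have "(\<integral>z. \<bar>d \<bullet> fst z\<bar> \<partial>P) \<le> sqrt (\<integral>z. \<bar>d \<bullet> fst z\<bar>\<^sup>2 \<partial>P)"
      by (rule abs_integral_sq[OF P(1) intc intc2])
    then show ?thesis using G by (simp add: hq)
  qed
  moreover have "theta * beta / 2 * hnorm2 H d \<le> beta / 2 * (\<integral>z. (dl (snd z * (w \<bullet> fst z)))\<^sup>2 * (d \<bullet> fst z)\<^sup>2 \<partial>P)"
  proof -
    have "beta / 2 * (theta * hnorm2 H d) \<le> beta / 2 * (\<integral>z. (dl (snd z * (w \<bullet> fst z)))\<^sup>2 * (d \<bullet> fst z)\<^sup>2 \<partial>P)"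
      using thq beta_pos by (intro mult_left_mono) auto
    then show ?thesis by (simp add: algebra_simps)
  qed
  ultimately show "exp_loss P l w - exp_loss P l ws + theta * beta / 2 * hnorm2 (exp_outer P (\<lambda>_. 1)) (w - ws)
          \<le> G * sqrt (hnorm2 (exp_outer P (\<lambda>_. 1)) (w - ws))"
    unfolding H_def d_def by linarith
  show "hnorm2 (exp_outer P (\<lambda>_. 1)) (w - ws) \<ge> 0" using h0 unfolding H_def d_def .
qed



theorem lemma8:
  fixes P :: "((real^'d) \<times> real) measure"
    and M :: "'w measure"
    and S :: "nat \<Rightarrow> 'w \<Rightarrow> (real^'d) \<times> real"
    and n :: nat
    and Y :: "real set"
    and R alpha G theta eta1 a :: real
    and l dl :: "real \<Rightarrow> real"
    and wstar :: "real^'d"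
    and w :: "nat \<Rightarrow> 'w \<Rightarrow> real^'d"
  assumes P: "prob_space P" "sets P = sets borel"
    and Y: "Y = {-1, 1} \<or> Y = {-1..1}"
    and supp: "AE z in P. norm (fst z) \<le> 1 \<and> snd z \<in> Y"
    and M: "prob_space M"
    and indep: "prob_space.indep_vars M (\<lambda>_. borel) S {1..n}"
    and distr: "\<forall>i\<in>{1..n}. distr M borel (S i) = P"
    and R: "R > 0"
    and l_nonneg: "\<forall>z. l z \<ge> 0"
    and l_deriv: "\<forall>z. (l has_real_derivative dl z) (at z)"
    and l_convex: "convex_on UNIV l"
    and alpha: "alpha > 0"
    and l_expconc: "concave_on {-R..R} (\<lambda>z. exp (- alpha * l z))"
    and G: "G > 0" "\<forall>z. \<bar>dl z\<bar> \<le> G"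
    and wstar: "norm wstar \<le> R" "\<forall>v. norm v \<le> R \<longrightarrow> exp_loss P l wstar \<le> exp_loss P l v"
    and theta: "theta > 0"
    and assmII: "\<forall>v. norm v \<le> R \<longrightarrow>
                   loewner_le (theta *\<^sub>R exp_outer P (\<lambda>_. 1))
                              (exp_outer P (\<lambda>z. (dl (snd z * (v \<bullet> fst z)))\<^sup>2))"
    and eta1: "eta1 > 0" and a: "a > 0"
    and w1: "\<forall>\<omega>. w 1 \<omega> = 0"
    and wstep: "\<forall>\<omega>. \<forall>i\<in>{1..<n}.
        norm (w (Suc i) \<omega>) \<le> R \<and>
        (\<forall>u. norm u \<le> R \<longrightarrow>
           ons_obj eta1 a dl (\<lambda>j. fst (S j \<omega>)) (\<lambda>j. snd (S j \<omega>)) i (w i \<omega>) (w (Suc i) \<omega>)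
           \<le> ons_obj eta1 a dl (\<lambda>j. fst (S j \<omega>)) (\<lambda>j. snd (S j \<omega>)) i (w i \<omega>) u)"
  shows "AE \<omega> in M.
           (\<Sum>i=1..n. hnorm2 (exp_outer P (\<lambda>_. 1)) (w i \<omega> - wstar)) \<le> 4 * R\<^sup>2 / real n \<longrightarrow>
           (\<Sum>i=1..n. exp_loss P l (w i \<omega>) - exp_loss P l wstar)
             + theta * (1/2 * min alpha (1 / (4 * G * R))) / 2
               * (\<Sum>i=1..n. hnorm2 (exp_outer P (\<lambda>_. 1)) (w i \<omega> - wstar))
           \<le> 2 * R * G"
proof (rule AE_I2, rule impI)
  fix \<omega>
  define beta where "beta = 1/2 * min alpha (1 / (4 * G * R))"
  define h where "h i = hnorm2 (exp_outer P (\<lambda>_. 1)) (w i \<omega> - wstar)" for i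
  define L where "L i = exp_loss P l (w i \<omega>) - exp_loss P l wstar" for i
  assume A: "(\<Sum>i=1..n. hnorm2 (exp_outer P (\<lambda>_. 1)) (w i \<omega> - wstar)) \<le> 4 * R\<^sup>2 / real n"
  have supp2: "AE z in P. norm (fst z) \<le> 1 \<and> \<bar>snd z\<bar> \<le> 1"
    using supp by eventually_elim (use Y in auto)
  have wR: "norm (w i \<omega>) \<le> R" if "i \<in> {1..n}" for i
  proof (cases "i = 1")
    case True then show ?thesis using w1 R by simp
  next
    case False
    have j: "i - 1 \<in> {1..<n}" "i = Suc (i - 1)" using that False by auto
    have "norm (w (Suc (i - 1)) \<omega>) \<le> R" using wstep j(1) by blast
    then show ?thesis using j(2) by simp
  qed
  have bnd: "L i + theta * beta / 2 * h i \<le> G * sqrt (h i)" and h0: "h i \<ge> 0"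
    if "i \<in> {1..n}" for i
    using per_i[OF P supp2 l_deriv alpha R l_expconc G beta_def theta _ wR[OF that] wstar(1)]
      assmII wR[OF that] unfolding L_def h_def by auto
  have "(\<Sum>i=1..n. L i) + theta * beta / 2 * (\<Sum>i=1..n. h i) = (\<Sum>i=1..n. L i + theta * beta / 2 * h i)"
    by (simp add: sum.distrib sum_distrib_left)
  also have "\<dots> \<le> (\<Sum>i=1..n. G * sqrt (h i))" by (rule sum_mono) (rule bnd)
  also have "\<dots> = G * (\<Sum>i=1..n. sqrt (h i))" by (simp add: sum_distrib_left)
  also have "\<dots> \<le> G * (2 * R)"
  proof (rule mult_left_mono)
    show "0 \<le> G" using G by simp
    show "(\<Sum>i=1..n. sqrt (h i)) \<le> 2 * R"
    proof (cases "n = 0")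
      case True then show ?thesis using R by simp
    next
      case False
      have "(\<Sum>i=1..n. sqrt (h i))\<^sup>2 \<le> (\<Sum>i=1..n. (sqrt (h i))\<^sup>2) * card {1..n}"
        by (rule sum_squared_le_sum_of_squares)
      also have "\<dots> = (\<Sum>i=1..n. h i) * real n" using h0 by simp
      also have "\<dots> \<le> 4 * R\<^sup>2 / real n * real n"
        using A unfolding h_def by (intro mult_right_mono) auto
      also have "\<dots> = (2 * R)\<^sup>2" using False by (simp add: power2_eq_square)
      finally show ?thesis
        by (rule power2_le_imp_le) (use R in simp)
    qed
  qed
  finally show "(\<Sum>i=1..n. exp_loss P l (w i \<omega>) - exp_loss P l wstar)
             + theta * (1/2 * min alpha (1 / (4 * G * R))) / 2
               * (\<Sum>i=1..n. hnorm2 (exp_outer P (\<lambda>_. 1)) (w i \<omega> - wstar))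
           \<le> 2 * R * G"
    unfolding L_def h_def beta_def by (simp add: algebra_simps)
qed

end
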